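(* Let $(x_n)$ be a nonincreasing interval-filling sequence of positive reals with cardinal function $f$ such that the strict inequality $r_k>x_k$ holds for exactly one index $k\in\mathbb{N}$. Then $\mathrm{rng}(f)$ equals either $\{1,2,3\}$ or $\{1,2,3,4\}$.
   Context: For a summable sequence $\mathbf{x}=(x_n)$ of positive reals, $\mathcal{A}(\mathbf{x})=\{\sum_{n\in A}x_n: A\subseteq\mathbb{N}\}$ is its achievement set and its cardinal function $f$ assigns to $x\in\mathcal{A}(\mathbf{x})$ the cardinality (a positive integer, $\omega$, or $\mathfrak{c}$) of $\{(\varepsilon_n)\in\{0,1\}^{\mathbb{N}}:\sum\varepsilon_nx_n=x\}$. The sequence is interval-filling if $\mathcal{A}(\mathbf{x})$ is an interval (equivalently $x_n\le r_n$ for all $n$). The tail sums are $r_n=\sum_{k=n+1}^\infty x_k$. *)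

theory Defs
  imports "HOL-Analysis.Analysis" "HOL-Library.Extended_Nat"
begin

definition achievement_set :: "(nat \<Rightarrow> real) \<Rightarrow> real set" where
  "achievement_set x = {s. \<exists>A :: nat set. (\<lambda>n. if n \<in> A then x n else 0) sums s}"

definition representations :: "(nat \<Rightarrow> real) \<Rightarrow> real \<Rightarrow> (nat \<Rightarrow> bool) set" where
  "representations x y = {e. (\<lambda>n. if e n then x n else 0) sums y}"

text \<open>Cardinal function; finite cardinalities are exact, any infinite
  cardinality (omega or continuum) is recorded as infinity.\<close>
definition cardinal_function :: "(nat \<Rightarrow> real) \<Rightarrow> real \<Rightarrow> enat" where
  "cardinal_function x y =
     (if finite (representations x y) then enat (card (representations x y)) else \<infinity>)"

definition tail_sum :: "(nat \<Rightarrow> real) \<Rightarrow> nat \<Rightarrow> real" where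
  "tail_sum x n = (\<Sum>k. x (k + n + 1))"

definition interval_filling :: "(nat \<Rightarrow> real) \<Rightarrow> bool" where
  "interval_filling x \<longleftrightarrow> is_interval (achievement_set x)"

end

theory Submission
  imports Defs
begin


lemma rep_iff: "e \<in> representations z y \<longleftrightarrow> (\<lambda>n. if e n then z n else 0) sums y"
  by (simp add: representations_def)

definition bcons :: "bool \<Rightarrow> (nat \<Rightarrow> bool) \<Rightarrow> nat \<Rightarrow> bool" where
  "bcons b e = (\<lambda>n. case n of 0 \<Rightarrow> b | Suc m \<Rightarrow> e m)"

lemma bcons_inj: "inj (bcons b)"
proof (rule injI)
  fix e e' assume "bcons b e = bcons b e'"
  hence "\<And>m. bcons b e (Suc m) = bcons b e' (Suc m)" by simp
  thus "e = e'" by (simp add: bcons_def fun_eq_iff)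
qed

lemma rep_split:
  "representations z y = bcons False ` representations (\<lambda>n. z (Suc n)) y
     \<union> bcons True ` representations (\<lambda>n. z (Suc n)) (y - z 0)"
proof (intro equalityI subsetI)
  fix e assume "e \<in> representations z y"
  hence S: "(\<lambda>n. if e n then z n else 0) sums y" by (simp add: rep_iff)
  have eq: "e = bcons (e 0) (\<lambda>n. e (Suc n))"
    by (auto simp: bcons_def fun_eq_iff split: nat.split)
  have S2: "(\<lambda>n. if e (Suc n) then z (Suc n) else 0) sums (y - (if e 0 then z 0 else 0))"
    using S sums_Suc_iff[of "\<lambda>n. if e n then z n else 0"] by simp
  show "e \<in> bcons False ` representations (\<lambda>n. z (Suc n)) y
     \<union> bcons True ` representations (\<lambda>n. z (Suc n)) (y - z 0)"
  proof (cases "e 0")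
    case True
    thus ?thesis using S2 eq by (auto simp: rep_iff intro!: image_eqI[where x="\<lambda>n. e (Suc n)"])
  next
    case False
    thus ?thesis using S2 eq by (auto simp: rep_iff intro!: image_eqI[where x="\<lambda>n. e (Suc n)"])
  qed
next
  fix e assume "e \<in> bcons False ` representations (\<lambda>n. z (Suc n)) y
     \<union> bcons True ` representations (\<lambda>n. z (Suc n)) (y - z 0)"
  then obtain b e' y' where e: "e = bcons b e'" and y': "y' = (if b then y - z 0 else y)"
     and S: "(\<lambda>n. if e' n then z (Suc n) else 0) sums y'"
    by (auto simp: rep_iff)
  have "(\<lambda>n. (\<lambda>m. if e m then z m else 0) (Suc n)) sums y'"
    using S by (simp add: e bcons_def)
  hence "(\<lambda>m. if e m then z m else 0) sums (y' + (if e 0 then z 0 else 0))"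
    by (rule sums_Suc_iff[THEN iffD1])
  moreover have "y' + (if e 0 then z 0 else 0) = y" using y' by (simp add: e bcons_def)
  ultimately show "e \<in> representations z y" by (simp add: rep_iff)
qed

lemma rep_card_split:
  assumes "finite (representations (\<lambda>n. z (Suc n)) y)"
    "finite (representations (\<lambda>n. z (Suc n)) (y - z 0))"
  shows "finite (representations z y) \<and> card (representations z y) =
     card (representations (\<lambda>n. z (Suc n)) y) + card (representations (\<lambda>n. z (Suc n)) (y - z 0))"
proof -
  have ne: "bcons False a 0 \<noteq> bcons True b 0" for a b by (simp add: bcons_def)
  have d: "bcons False ` A \<inter> bcons True ` B = {}" for A B
    apply (rule equals0I)
    apply (elim IntE imageE)
    using ne by metis
  have i: "inj_on (bcons b) A" for b A using bcons_inj inj_on_subset by blast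
  show ?thesis
    apply (subst (1 2) rep_split)
    using assms d i by (simp add: card_Un_disjoint card_image)
qed

context
  fixes z :: "nat \<Rightarrow> real"
  assumes zpos: "\<And>n. z n > 0" and zsum: "summable z"
begin

lemma rep_bounds: "e \<in> representations z y \<Longrightarrow> 0 \<le> y \<and> y \<le> suminf z"
proof -
  assume "e \<in> representations z y"
  hence S: "(\<lambda>n. if e n then z n else 0) sums y" by (simp add: rep_iff)
  have "0 \<le> y" by (rule sums_le[OF _ sums_zero S]) (simp add: less_imp_le zpos)
  moreover have "y \<le> suminf z" by (rule sums_le[OF _ S summable_sums[OF zsum]]) (simp add: less_imp_le zpos)
  ultimately show ?thesis by simp
qed

lemma rep_out: "y < 0 \<or> y > suminf z \<Longrightarrow> representations z y = {}"
  using rep_bounds by fastforce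

lemma rep_zero: "representations z 0 = {\<lambda>_. False}"
proof (intro equalityI subsetI)
  fix e assume "e \<in> representations z 0"
  hence S: "(\<lambda>n. if e n then z n else 0) sums 0" by (simp add: rep_iff)
  have "\<forall>n. (if e n then z n else 0) = 0"
    using suminf_eq_zero_iff[of "\<lambda>n. if e n then z n else 0"] S
    by (simp add: sums_iff less_imp_le zpos)
  hence "\<forall>n. \<not> e n" using zpos by (metis less_irrefl)
  thus "e \<in> {\<lambda>_. False}" by auto
qed (simp add: rep_iff)

lemma rep_top: "representations z (suminf z) = {\<lambda>_. True}"
proof (intro equalityI subsetI)
  fix e assume "e \<in> representations z (suminf z)"
  hence S: "(\<lambda>n. if e n then z n else 0) sums suminf z" by (simp add: rep_iff)
  have S2: "(\<lambda>n. z n - (if e n then z n else 0)) sums 0"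
    using sums_diff[OF summable_sums[OF zsum] S] by simp
  have "\<forall>n. z n - (if e n then z n else 0) = 0"
    using suminf_eq_zero_iff[of "\<lambda>n. z n - (if e n then z n else 0)"] S2
    by (simp add: sums_iff less_imp_le zpos)
  hence "\<forall>n. e n" using zpos by (metis diff_zero less_irrefl)
  thus "e \<in> {\<lambda>_. True}" by auto
qed (simp add: rep_iff summable_sums[OF zsum])

end



definition geo :: "real \<Rightarrow> nat \<Rightarrow> real" where "geo c n = c / 2^n"

lemma geo_sums: "geo c sums (2*c)"
proof -
  have "(\<lambda>n. c * (1/2)^n) sums (c * (1 / (1 - 1/2)))"
    by (rule sums_mult) (rule geometric_sums, simp)
  moreover have "geo c = (\<lambda>n. c / 2^n)" by (simp add: fun_eq_iff geo_def)
  ultimately show ?thesis by (simp add: power_one_over mult.commute)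
qed

lemma geo_shift_sums: "(\<lambda>i. geo c (i + Suc m)) sums geo c m"
proof -
  have "geo (c / 2^Suc m) sums (2 * (c / 2^Suc m))" by (rule geo_sums)
  moreover have "geo (c / 2^Suc m) = (\<lambda>i. geo c (i + Suc m))"
    by (simp add: geo_def fun_eq_iff power_add)
  moreover have "2 * (c / 2^Suc m) = geo c m" by (simp add: geo_def)
  ultimately show ?thesis by simp
qed

context
  fixes c :: real
  assumes cpos: "c > 0"
begin

lemma geo_pos: "geo c n > 0" using cpos by (simp add: geo_def)

lemma geo_pair_aux:
  assumes r: "e \<in> representations (geo c) y" "e' \<in> representations (geo c) y"
    and before: "\<forall>n<m. e n = e' n" and em: "e m" "\<not> e' m"
  shows "\<forall>n>m. \<not> e n \<and> e' n"
proof -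
  define d where "d n = (if e n then geo c n else 0) - (if e' n then geo c n else 0)" for n
  have ds: "d sums 0" unfolding d_def using sums_diff[OF r[unfolded rep_iff]] by simp
  have "(\<Sum>i<m. d i) = 0" using before by (simp add: d_def)
  hence "(\<lambda>i. d (i + m)) sums 0" using ds sums_iff_shift[of d m 0] by simp
  hence "(\<lambda>i. d (Suc i + m)) sums (0 - d (0 + m))"
    using sums_Suc_iff[of "\<lambda>i. d (i + m)" "0 - d (0+m)"] by simp
  hence s1: "(\<lambda>i. d (i + Suc m)) sums (- geo c m)" using em by (simp add: d_def)
  have h: "(\<lambda>i. d (i + Suc m) + geo c (i + Suc m)) sums 0"
    using sums_add[OF s1 geo_shift_sums[of c m]] by simp
  have hnn: "\<And>i. 0 \<le> d (i + Suc m) + geo c (i + Suc m)"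
    using geo_pos by (simp add: d_def less_imp_le)
  have "\<forall>i. d (i + Suc m) + geo c (i + Suc m) = 0"
    using suminf_eq_zero_iff[of "\<lambda>i. d (i + Suc m) + geo c (i + Suc m)"] h hnn
    by (simp add: sums_iff)
  hence z: "\<And>i. d (i + Suc m) + geo c (i + Suc m) = 0" by blast
  show ?thesis
  proof (intro allI impI)
    fix n assume "n > m"
    define i where "i = n - Suc m"
    have n: "n = i + Suc m" using \<open>n > m\<close> by (simp add: i_def)
    have "d n + geo c n = 0" using z n by simp
    thus "\<not> e n \<and> e' n" using geo_pos[of n] unfolding d_def
      by (cases "e n"; cases "e' n") auto
  qed
qed

lemma geo_pair:
  assumes r: "e \<in> representations (geo c) y" "e' \<in> representations (geo c) y"
    and ne: "e \<noteq> e'"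
  shows "\<exists>m. (\<forall>n<m. e n = e' n) \<and> e m \<noteq> e' m \<and> (\<forall>n>m. e n = e' m \<and> e' n = e m)"
proof -
  have ex: "\<exists>n. e n \<noteq> e' n" using ne by (auto simp: fun_eq_iff)
  define m where "m = (LEAST n. e n \<noteq> e' n)"
  have dm: "e m \<noteq> e' m" unfolding m_def by (rule LeastI_ex[OF ex])
  have bef: "\<forall>n<m. e n = e' n" unfolding m_def using not_less_Least by blast
  show ?thesis
  proof (cases "e m")
    case True
    with dm have "\<not> e' m" by simp
    with geo_pair_aux[OF r bef True] True show ?thesis using dm bef by (intro exI[of _ m]) auto
  next
    case False
    with dm have "e' m" by simp
    with geo_pair_aux[OF r(2) r(1) _ \<open>e' m\<close> False] bef False show ?thesis
      using dm by (intro exI[of _ m]) auto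
  qed
qed

lemma geo_three:
  assumes r: "e1 \<in> representations (geo c) y" "e2 \<in> representations (geo c) y"
     "e3 \<in> representations (geo c) y"
    and ne: "e1 \<noteq> e2" "e1 \<noteq> e3"
  shows "e2 = e3"
proof -
  obtain m where m: "\<forall>n<m. e1 n = e2 n" "e1 m \<noteq> e2 m" "\<forall>n>m. e1 n = e2 m \<and> e2 n = e1 m"
    using geo_pair[OF r(1,2) ne(1)] by blast
  obtain m' where m': "\<forall>n<m'. e1 n = e3 n" "e1 m' \<noteq> e3 m'" "\<forall>n>m'. e1 n = e3 m' \<and> e3 n = e1 m'"
    using geo_pair[OF r(1,3) ne(2)] by blast
  have "\<not> m < m'"
  proof
    assume "m < m'"
    have "e1 m' = e2 m" using m(3) \<open>m < m'\<close> by blast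
    moreover have "e1 (Suc m') = e2 m" using m(3) \<open>m < m'\<close> less_SucI by blast
    moreover have "e1 (Suc m') = e3 m'" using m'(3) lessI by blast
    ultimately show False using m'(2) by simp
  qed
  moreover have "\<not> m' < m"
  proof
    assume "m' < m"
    have "e1 m = e3 m'" using m'(3) \<open>m' < m\<close> by blast
    moreover have "e1 (Suc m) = e3 m'" using m'(3) \<open>m' < m\<close> less_SucI by blast
    moreover have "e1 (Suc m) = e2 m" using m(3) lessI by blast
    ultimately show False using m(2) by simp
  qed
  ultimately have "m = m'" by simp
  show "e2 = e3"
  proof
    fix n show "e2 n = e3 n"
    proof (cases n m rule: linorder_cases)
      case less thus ?thesis using m(1) m'(1) \<open>m = m'\<close> by metis
    next
      case equal thus ?thesis using m(2) m'(2) \<open>m = m'\<close> by metis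
    next
      case greater thus ?thesis using m(3) m'(3) \<open>m = m'\<close> by metis
    qed
  qed
qed

lemma geo_fin: "finite (representations (geo c) y) \<and> card (representations (geo c) y) \<le> 2"
proof -
  let ?R = "representations (geo c) y"
  have "\<exists>A. ?R \<subseteq> A \<and> finite A \<and> card A \<le> 2"
  proof (cases "?R = {}")
    case True thus ?thesis by (intro exI[of _ "{}"]) auto
  next
    case False
    then obtain e1 where e1: "e1 \<in> ?R" by blast
    show ?thesis
    proof (cases "?R \<subseteq> {e1}")
      case True thus ?thesis by (intro exI[of _ "{e1}"]) auto
    next
      case False
      then obtain e2 where e2: "e2 \<in> ?R" "e2 \<noteq> e1" by blast
      have "?R \<subseteq> {e1, e2}" using geo_three[OF e1 e2(1)] e2 by blast
      thus ?thesis by (intro exI[of _ "{e1,e2}"]) (auto simp: card_insert_if)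
    qed
  qed
  thus ?thesis by (meson card_mono finite_subset le_trans)
qed

lemma geo_card2_fin:
  assumes "card (representations (geo c) y) = 2"
  shows "\<exists>e\<in>representations (geo c) y. \<exists>N. \<forall>n\<ge>N. \<not> e n"
proof -
  obtain e e' where ee: "representations (geo c) y = {e, e'}" "e \<noteq> e'"
    using assms card_2_iff by metis
  hence r: "e \<in> representations (geo c) y" "e' \<in> representations (geo c) y" by auto
  obtain m where m: "e m \<noteq> e' m" "\<forall>n>m. e n = e' m \<and> e' n = e m"
    using geo_pair[OF r ee(2)] by blast
  show ?thesis
  proof (cases "e m")
    case True
    thus ?thesis using r m by (intro bexI[of _ e] exI[of _ "Suc m"]) auto
  next
    case False
    thus ?thesis using r m by (intro bexI[of _ e'] exI[of _ "Suc m"]) auto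
  qed
qed

lemma geo_fin_card2:
  assumes r: "e \<in> representations (geo c) y" and N: "\<forall>n\<ge>N. \<not> e n" and ex: "\<exists>n. e n"
  shows "card (representations (geo c) y) = 2"
proof -
  have finS: "finite {n. e n}" using N
    by (metis (mono_tags) finite_nat_set_iff_bounded mem_Collect_eq not_le)
  define m where "m = Max {n. e n}"
  have em: "e m" unfolding m_def using finS ex Max_in by (metis empty_iff mem_Collect_eq)
  have aft: "\<forall>n>m. \<not> e n" unfolding m_def using finS Max_ge by (metis mem_Collect_eq not_le)
  define e' where "e' n = (if n < m then e n else if n = m then False else True)" for n
  define f where "f n = (if n = m then - geo c m else if n > m then geo c n else 0)" for n
  have "(\<lambda>i. f (i + Suc m)) = (\<lambda>i. geo c (i + Suc m))" by (simp add: f_def fun_eq_iff)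
  hence fs1: "(\<lambda>i. f (i + Suc m)) sums geo c m" using geo_shift_sums by simp
  have "(\<Sum>i<Suc m. f i) = (\<Sum>i<Suc m. if i = m then - geo c m else 0)"
    by (rule sum.cong) (auto simp: f_def)
  also have "\<dots> = - geo c m" by simp
  finally have "f sums (geo c m + - geo c m)" using fs1 sums_iff_shift[of f "Suc m"] by simp
  hence fs: "f sums 0" by simp
  have "(\<lambda>n. (if e n then geo c n else 0) + f n) sums (y + 0)"
    using sums_add[OF r[unfolded rep_iff] fs] .
  moreover have "(\<lambda>n. (if e n then geo c n else 0) + f n) = (\<lambda>n. if e' n then geo c n else 0)"
    using em aft by (auto simp: fun_eq_iff e'_def f_def)
  ultimately have r': "e' \<in> representations (geo c) y" by (simp add: rep_iff)
  have "e \<noteq> e'" using em by (auto simp: fun_eq_iff e'_def intro!: exI[of _ m])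
  hence "card {e, e'} \<le> card (representations (geo c) y)"
    using r r' geo_fin by (intro card_mono) auto
  thus ?thesis using geo_fin[of y] \<open>e \<noteq> e'\<close> by simp
qed

end



lemma floor_double: "\<lfloor>2 * z\<rfloor> = 2 * \<lfloor>z\<rfloor> + (if odd \<lfloor>2 * z\<rfloor> then 1 else 0)" for z :: real
proof -
  have a: "2 * \<lfloor>z\<rfloor> \<le> \<lfloor>2 * z\<rfloor>" unfolding le_floor_iff by simp
  have "2 * z < of_int (2 * \<lfloor>z\<rfloor> + 2)" using real_of_int_floor_add_one_gt[of z] by linarith
  hence "\<lfloor>2 * z\<rfloor> < 2 * \<lfloor>z\<rfloor> + 2" unfolding floor_less_iff .
  with a show ?thesis by presburger
qed

definition dy :: "real \<Rightarrow> real set" where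
  "dy c = {y. \<exists>(i::int) (j::nat). y = c * of_int i / 2^j}"

lemma dy_add: "y \<in> dy c \<Longrightarrow> y' \<in> dy c \<Longrightarrow> y + y' \<in> dy c"
proof -
  assume "y \<in> dy c" "y' \<in> dy c"
  then obtain i j i' j' where yi: "y = c * of_int i / 2^j" and yi': "y' = c * of_int i' / 2^j'"
    by (auto simp: dy_def)
  have "y + y' = c * of_int (i * 2^j' + i' * 2^j) / 2^(j+j')"
    unfolding yi yi' by (simp add: power_add field_simps)
  thus ?thesis unfolding dy_def by blast
qed

lemma dy_diff: "y \<in> dy c \<Longrightarrow> y' \<in> dy c \<Longrightarrow> y - y' \<in> dy c"
proof -
  assume "y \<in> dy c" "y' \<in> dy c"
  then obtain i j i' j' where yi: "y = c * of_int i / 2^j" and yi': "y' = c * of_int i' / 2^j'"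
    by (auto simp: dy_def)
  have "y - y' = c * of_int (i * 2^j' - i' * 2^j) / 2^(j+j')"
    unfolding yi yi' by (simp add: power_add field_simps)
  thus ?thesis unfolding dy_def by blast
qed

lemma geo_in_dy: "geo c n \<in> dy c"
  unfolding dy_def geo_def by (rule CollectI, rule exI[of _ 1], rule exI[of _ n]) simp

lemma zero_in_dy: "0 \<in> dy c"
  unfolding dy_def by (rule CollectI, rule exI[of _ 0], rule exI[of _ 0]) simp

lemma finrep_dy:
  assumes r: "e \<in> representations (geo c) y" and N: "\<forall>n\<ge>N. \<not> e n"
  shows "y \<in> dy c"
proof -
  have "(\<lambda>n. if e n then geo c n else 0) sums (\<Sum>n\<in>{..<N}. if e n then geo c n else 0)"
    by (rule sums_finite) (use N in auto)
  hence y: "y = (\<Sum>n<N. if e n then geo c n else 0)"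
    using r by (simp add: rep_iff sums_unique2)
  have "(\<Sum>n<M. if e n then geo c n else 0) \<in> dy c" for M
    by (induction M) (auto simp: zero_in_dy geo_in_dy intro: dy_add)
  thus ?thesis using y by simp
qed

context
  fixes c :: real
  assumes cpos: "c > 0"
begin

lemma geo_digits:
  assumes u0: "0 \<le> u" and u2: "u < 2"
  shows "(\<lambda>n. odd \<lfloor>u * 2^n\<rfloor>) \<in> representations (geo c) (c * u)"
proof -
  define e where "e n = odd \<lfloor>u * 2^n\<rfloor>" for n
  have P: "(\<Sum>n<Suc N. if e n then geo c n else 0) = c * \<lfloor>u * 2^N\<rfloor> / 2^N" for N
  proof (induction N)
    case 0
    have "\<lfloor>u\<rfloor> = 0 \<or> \<lfloor>u\<rfloor> = 1"
    proof -
      have "0 \<le> \<lfloor>u\<rfloor>" using u0 by simp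
      moreover have "\<lfloor>u\<rfloor> < 2" using u2 by (simp add: floor_less_iff)
      ultimately show ?thesis by linarith
    qed
    thus ?case by (auto simp: e_def geo_def)
  next
    case (Suc N)
    have fd: "\<lfloor>u * 2^Suc N\<rfloor> = 2 * \<lfloor>u * 2^N\<rfloor> + (if e (Suc N) then 1 else 0)"
      using floor_double[of "u * 2^N"] by (simp add: e_def mult.commute mult.left_commute)
    have "(\<Sum>n<Suc (Suc N). if e n then geo c n else 0)
        = c * \<lfloor>u * 2^N\<rfloor> / 2^N + (if e (Suc N) then geo c (Suc N) else 0)"
      using Suc by simp
    also have "\<dots> = c * \<lfloor>u * 2^Suc N\<rfloor> / 2^Suc N"
      unfolding fd by (simp add: geo_def field_simps)
    finally show ?case .
  qed
  have lo: "c * u - c / 2^N \<le> c * \<lfloor>u * 2^N\<rfloor> / 2^N" for N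
  proof -
    have "u * 2^N - 1 \<le> of_int \<lfloor>u * 2^N\<rfloor>" by linarith
    hence ineq: "c * (u * 2^N - 1) \<le> c * of_int \<lfloor>u * 2^N\<rfloor>" using cpos by simp
    have eq: "c * u - c / 2^N = (c * (u * 2^N - 1)) / 2^N" by (simp add: field_simps)
    show ?thesis by (subst eq) (rule divide_right_mono[OF ineq], simp)
  qed
  have hi: "c * \<lfloor>u * 2^N\<rfloor> / 2^N \<le> c * u" for N
  proof -
    have "of_int \<lfloor>u * 2^N\<rfloor> \<le> u * 2^N" by simp
    hence ineq: "c * of_int \<lfloor>u * 2^N\<rfloor> \<le> c * (u * 2^N)" using cpos by simp
    have "c * \<lfloor>u * 2^N\<rfloor> / 2^N \<le> c * (u * 2^N) / 2^N"
      by (rule divide_right_mono[OF ineq], simp)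
    thus ?thesis by simp
  qed
  have l1: "(\<lambda>N. c * u - c / 2^N) \<longlonglongrightarrow> c * u - 0"
    by (intro tendsto_diff tendsto_const LIMSEQ_divide_realpow_zero) simp
  have "(\<lambda>N. c * \<lfloor>u * 2^N\<rfloor> / 2^N) \<longlonglongrightarrow> c * u"
    by (rule real_tendsto_sandwich[OF _ _ l1[simplified] tendsto_const]) (auto simp: lo hi)
  hence "(\<lambda>N. \<Sum>n<Suc N. if e n then geo c n else 0) \<longlonglongrightarrow> c * u" by (simp only: P)
  hence "(\<lambda>N. \<Sum>n<N. if e n then geo c n else 0) \<longlonglongrightarrow> c * u"
    using filterlim_sequentially_Suc[of "\<lambda>N. \<Sum>n<N. if e n then geo c n else 0"] by simp
  hence "(\<lambda>n. if e n then geo c n else 0) sums (c * u)" by (simp add: sums_def)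
  thus ?thesis by (simp add: rep_iff e_def)
qed

lemma geo_exists:
  assumes "0 \<le> y" "y \<le> 2 * c"
  shows "representations (geo c) y \<noteq> {}"
proof (cases "y = 2 * c")
  case True
  have "(\<lambda>_. True) \<in> representations (geo c) y" using geo_sums True by (simp add: rep_iff)
  thus ?thesis by blast
next
  case False
  have "0 \<le> y / c" "y / c < 2" using assms False cpos by (auto simp: field_simps)
  from geo_digits[OF this] have "(\<lambda>n. odd \<lfloor>y / c * 2^n\<rfloor>) \<in> representations (geo c) (c * (y / c))" .
  thus ?thesis using cpos by auto
qed

lemma geo_dyadic:
  assumes y: "y = c * of_int i / 2^j" and "0 \<le> y" "y < 2 * c"
  shows "\<exists>e \<in> representations (geo c) y. \<forall>n\<ge>Suc j. \<not> e n"
proof -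
  define u :: real where "u = of_int i / 2^j"
  have yu: "y = c * u" using y by (simp add: u_def)
  have uy: "u = y / c" using yu cpos by simp
  have "0 \<le> u" using assms(2) cpos uy by simp
  moreover have "u < 2" using assms(3) cpos uy by (simp add: divide_less_eq)
  ultimately have "0 \<le> u" "u < 2" by auto
  from geo_digits[OF this] have r: "(\<lambda>n. odd \<lfloor>u * 2^n\<rfloor>) \<in> representations (geo c) y"
    using yu by simp
  have "\<not> odd \<lfloor>u * 2^n\<rfloor>" if "n \<ge> Suc j" for n
  proof -
    have n: "n = j + (n - j)" using that by simp
    have "u * 2^n = of_int (i * 2^(n-j))"
      by (subst n, simp add: u_def power_add)
    hence "\<lfloor>u * 2^n\<rfloor> = i * 2^(n-j)" by (simp only: floor_of_int)
    moreover have "even (i * 2^(n-j))" using that by simp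
    ultimately show ?thesis by simp
  qed
  thus ?thesis using r by (intro bexI[of _ "\<lambda>n. odd \<lfloor>u * 2^n\<rfloor>"]) auto
qed

end



definition cntf :: "(nat \<Rightarrow> real) \<Rightarrow> nat \<Rightarrow> real \<Rightarrow> nat" where
  "cntf x n y = card (representations (\<lambda>m. x (m + n)) y)"

definition Vs :: "(nat \<Rightarrow> real) \<Rightarrow> nat \<Rightarrow> nat set" where
  "Vs x n = {v. \<exists>y. v = cntf x n y \<and> v \<noteq> 0}"

context
  fixes x :: "nat \<Rightarrow> real"
  assumes pos: "\<And>n. x n > 0" and summ: "summable x" and noninc: "decseq x"
    and ifill: "interval_filling x"
begin

lemma Xsumm: "summable (\<lambda>m. x (m + n))" by (rule summable_ignore_initial_segment[OF summ])

lemma ts_eq: "tail_sum x n = suminf (\<lambda>m. x (m + Suc n))" by (simp add: tail_sum_def)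

lemma ts_split: "tail_sum x n = x (Suc n) + tail_sum x (Suc n)"
proof -
  have "(\<Sum>m. x (Suc m + Suc n)) = suminf (\<lambda>m. x (m + Suc n)) - x (0 + Suc n)"
    using suminf_split_head[OF Xsumm[of "Suc n"]] by simp
  thus ?thesis by (simp add: ts_eq)
qed

lemma ts_sums: "(\<lambda>m. x (m + Suc n)) sums tail_sum x n"
  unfolding ts_eq by (rule summable_sums[OF Xsumm])

lemma le_tail: "x n \<le> tail_sum x n"
proof (rule ccontr)
  assume "\<not> ?thesis" hence lt: "tail_sum x n < x n" by simp
  have r0: "0 \<le> tail_sum x n" unfolding ts_eq
    by (rule suminf_nonneg[OF Xsumm]) (simp add: less_imp_le pos)
  define t where "t = (tail_sum x n + x n) / 2"
  have a0: "0 \<in> achievement_set x" unfolding achievement_set_def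
    by (rule CollectI, rule exI[of _ "{}"]) simp
  have "(\<lambda>m. if m \<in> {n} then x m else 0) sums x n" using sums_single[of n x] by simp
  hence a1: "x n \<in> achievement_set x" unfolding achievement_set_def by blast
  have tb: "0 \<le> t \<and> t \<le> x n" using r0 lt by (simp add: t_def)
  have iv: "\<forall>a\<in>achievement_set x. \<forall>b\<in>achievement_set x. \<forall>z. a \<le> z \<and> z \<le> b \<longrightarrow> z \<in> achievement_set x"
    using ifill unfolding interval_filling_def is_interval_1 .
  have "t \<in> achievement_set x" using iv a0 a1 tb by blast
  then obtain A where S: "(\<lambda>m. if m \<in> A then x m else 0) sums t"
    unfolding achievement_set_def by blast
  show False
  proof (cases "\<exists>m\<in>A. m \<le> n")
    case True
    then obtain m where m: "m \<in> A" "m \<le> n" by blast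
    have "x m \<le> t"
      by (rule sums_le[OF _ sums_single[of m x] S]) (use m pos in \<open>auto simp: less_imp_le\<close>)
    moreover have "x n \<le> x m" using decseqD[OF noninc m(2)] .
    ultimately show False using lt by (simp add: t_def)
  next
    case False
    define f where "f m = (if m \<in> A then x m else 0)" for m
    have "(\<Sum>i<Suc n. f i) = 0" using False by (force simp: f_def intro!: sum.neutral)
    moreover have "f sums t" using S by (simp add: f_def[abs_def])
    ultimately have "f sums (t + (\<Sum>i<Suc n. f i))" by simp
    hence sh: "(\<lambda>i. f (i + Suc n)) sums t" by (simp only: sums_iff_shift)
    have "t \<le> tail_sum x n"
      by (rule sums_le[OF _ sh ts_sums]) (auto simp: f_def less_imp_le pos)
    thus False using lt by (simp add: t_def)
  qed
qed

context
  fixes k :: nat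
  assumes tk: "tail_sum x k > x k" and uq: "\<And>n. tail_sum x n > x n \<Longrightarrow> n = k"
begin

lemma eq_tail: "n \<noteq> k \<Longrightarrow> x n = tail_sum x n"
  using le_tail[of n] uq[of n] by force

lemma geo_part: "x (m + Suc k) = x (Suc k) / 2^m"
proof (induction m)
  case 0 thus ?case by simp
next
  case (Suc m)
  let ?p = "m + Suc k"
  have "x ?p = tail_sum x ?p" by (rule eq_tail) simp
  also have "\<dots> = x (Suc ?p) + tail_sum x (Suc ?p)" by (rule ts_split)
  also have "tail_sum x (Suc ?p) = x (Suc ?p)" by (rule eq_tail[symmetric]) simp
  finally have "x (Suc ?p) = x ?p / 2" by simp
  thus ?case using Suc by simp
qed

lemma Xgeo: "(\<lambda>m. x (m + Suc k)) = geo (x (Suc k))"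
proof (rule ext)
  fix m show "x (m + Suc k) = geo (x (Suc k)) m" using geo_part[of m] by (simp add: geo_def)
qed

lemma tk2: "tail_sum x k = 2 * x (Suc k)"
  using ts_sums[of k] geo_sums[of "x (Suc k)"] unfolding Xgeo by (simp add: sums_unique2)

lemma shiftX: "(\<lambda>m. (\<lambda>m. x (m + n)) (Suc m)) = (\<lambda>m. x (m + Suc n))" by simp

lemma finR: "n \<le> Suc k \<Longrightarrow> finite (representations (\<lambda>m. x (m + n)) y)"
proof -
  have "\<forall>y. finite (representations (\<lambda>m. x (m + (Suc k - d))) y)" for d
  proof (induction d)
    case 0
    have sk: "Suc k - 0 = Suc k" by simp
    show ?case unfolding sk Xgeo using geo_fin[OF pos[of "Suc k"]] by blast
  next
    case (Suc d)
    show ?case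
    proof (cases "d < Suc k")
      case False
      hence "Suc k - Suc d = Suc k - d" by simp
      thus ?thesis using Suc.IH by simp
    next
      case True
      define n where "n = Suc k - Suc d"
      have sn: "Suc n = Suc k - d" using True by (simp add: n_def)
      show ?thesis
      proof
        fix y
        have "finite (representations (\<lambda>m. x (m + n)) y)"
          using rep_card_split[of "\<lambda>m. x (m + n)" y] Suc.IH unfolding shiftX sn by simp
        thus "finite (representations (\<lambda>m. x (m + (Suc k - Suc d))) y)" by (simp add: n_def)
      qed
    qed
  qed
  moreover assume "n \<le> Suc k"
  ultimately show ?thesis by (metis diff_diff_cancel)
qed

lemma cnt_split: "n \<le> k \<Longrightarrow> cntf x n y = cntf x (Suc n) y + cntf x (Suc n) (y - x n)"
  using rep_card_split[of "\<lambda>m. x (m + n)" y] finR[of "Suc n"] unfolding shiftX cntf_def by simp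

lemma cnt_zero: "cntf x n 0 = 1"
  using rep_zero[of "\<lambda>m. x (m + n)", OF pos Xsumm] unfolding cntf_def by simp

lemma V_step:
  assumes nk: "n < k"
  shows "Vs x n = insert 2 (Vs x (Suc n))"
proof -
  have zs: "suminf (\<lambda>m. x (m + Suc n)) = x n" using eq_tail[of n] nk ts_eq by simp
  have ctop: "cntf x (Suc n) (x n) = 1"
    using rep_top[of "\<lambda>m. x (m + Suc n)", OF pos Xsumm] zs unfolding cntf_def by simp
  have c0: "cntf x (Suc n) 0 = 1" by (rule cnt_zero)
  have cout: "cntf x (Suc n) y = 0" if "y < 0 \<or> y > x n" for y
    using rep_out[of "\<lambda>m. x (m + Suc n)", OF pos Xsumm, of y] zs that unfolding cntf_def by simp
  have cnz: "0 \<le> y \<and> y \<le> x n" if "cntf x (Suc n) y \<noteq> 0" for y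
  proof (rule ccontr)
    assume "\<not> (0 \<le> y \<and> y \<le> x n)"
    hence "y < 0 \<or> x n < y" by linarith
    thus False using cout[of y] that by simp
  qed
  have sp: "cntf x n y = cntf x (Suc n) y + cntf x (Suc n) (y - x n)" for y
    using cnt_split nk by simp
  show ?thesis
  proof (intro equalityI subsetI)
    fix v assume "v \<in> Vs x n"
    then obtain y where y: "v = cntf x n y" "v \<noteq> 0" by (auto simp: Vs_def)
    show "v \<in> insert 2 (Vs x (Suc n))"
    proof (cases "cntf x (Suc n) y = 0")
      case True
      thus ?thesis using y sp[of y] by (auto simp: Vs_def)
    next
      case False
      show ?thesis
      proof (cases "cntf x (Suc n) (y - x n) = 0")
        case True
        thus ?thesis using y sp[of y] by (auto simp: Vs_def)
      next
        case F2: False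
        have "y = x n" using cnz[OF False] cnz[OF F2] by simp
        hence "v = 2" using y sp[of y] ctop c0 by simp
        thus ?thesis by simp
      qed
    qed
  next
    fix v assume "v \<in> insert 2 (Vs x (Suc n))"
    then consider "v = 2" | "v \<in> Vs x (Suc n)" by blast
    thus "v \<in> Vs x n"
    proof cases
      case 1
      have "cntf x n (x n) = 2" using sp[of "x n"] ctop c0 by simp
      thus ?thesis using 1 unfolding Vs_def by force
    next
      case 2
      then obtain y where y: "v = cntf x (Suc n) y" "v \<noteq> 0" by (auto simp: Vs_def)
      show ?thesis
      proof (cases "y = 0")
        case True
        hence "v = cntf x n 0" using y c0 cnt_zero by simp
        thus ?thesis using y unfolding Vs_def by blast
      next
        case False
        have "0 \<le> y" using cnz[of y] y by simp
        hence yp: "y > 0" using False by simp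
        have "cntf x n (y + x n) = v"
          using sp[of "y + x n"] cout[of "y + x n"] yp y by simp
        hence "v = cntf x n (y + x n) \<and> v \<noteq> 0" using y by simp
        thus ?thesis unfolding Vs_def by blast
      qed
    qed
  qed
qed

lemma V_down:
  assumes two: "2 \<in> Vs x k"
  shows "Vs x 0 = Vs x k"
proof -
  have "Vs x (k - d) = Vs x k" for d
  proof (induction d)
    case 0 thus ?case by simp
  next
    case (Suc d)
    show ?case
    proof (cases "d < k")
      case True
      have e: "Suc (k - Suc d) = k - d" using True by simp
      have "Vs x (k - Suc d) = insert 2 (Vs x (k - d))"
        using V_step[of "k - Suc d"] True e by simp
      thus ?thesis using Suc.IH two by auto
    next
      case False
      thus ?thesis using Suc.IH by simp
    qed
  qed
  from this[of k] show ?thesis by simp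
qed


lemma Vk: "2 \<in> Vs x k \<and> (Vs x k = {1,2,3} \<or> Vs x k = {1,2,3,4})"
proof -
  define c where "c = x (Suc k)"
  define a where "a = x k"
  have cpos: "c > 0" using pos by (simp add: c_def)
  have ca: "c \<le> a" using decseqD[OF noninc, of k "Suc k"] by (simp add: c_def a_def)
  have a2: "a < 2 * c" using tk tk2 by (simp add: c_def a_def)
  have apos: "a > 0" using pos by (simp add: a_def)
  define g where "g y = card (representations (geo c) y)" for y
  have cntk: "cntf x k y = g y + g (y - a)" for y
    using cnt_split[of k y] unfolding cntf_def g_def a_def c_def by (simp add: Xgeo[symmetric])
  have gpos: "\<And>n. geo c n > 0" using geo_pos[OF cpos] .
  have gsum: "summable (geo c)" using geo_sums by (rule sums_summable)
  have gsuminf: "suminf (geo c) = 2 * c" using geo_sums by (rule sums_unique[symmetric])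
  have gle: "g y \<le> 2" for y using geo_fin[OF cpos] by (simp add: g_def)
  have gfin: "finite (representations (geo c) y)" for y using geo_fin[OF cpos] by simp
  have g0: "g 0 = 1" using rep_zero[of "geo c", OF gpos gsum] by (simp add: g_def)
  have gout: "g y = 0" if "y < 0 \<or> y > 2 * c" for y
    using rep_out[of "geo c", OF gpos gsum, of y] that gsuminf by (simp add: g_def)
  have gin: "g y \<ge> 1" if "0 \<le> y" "y \<le> 2 * c" for y
    using geo_exists[OF cpos that] gfin[of y] by (simp add: g_def Suc_le_eq card_gt_0_iff)
  have g2dy: "y \<in> dy c" if "g y = 2" for y
    using geo_card2_fin[OF cpos, of y] that finrep_dy by (auto simp: g_def)
  have gJ: "g (geo c J) = 2" for J
  proof -
    have "(\<lambda>n. if n = J then geo c n else 0) sums geo c J" by (rule sums_single)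
    hence r: "(\<lambda>n. n = J) \<in> representations (geo c) (geo c J)" by (simp add: rep_iff)
    show ?thesis unfolding g_def
      by (rule geo_fin_card2[OF cpos r, of "Suc J"]) auto
  qed
  have inV: "v \<in> Vs x k" if "cntf x k y = v" "v \<noteq> 0" for y v
    using that unfolding Vs_def by blast
  have sub: "Vs x k \<subseteq> {1,2,3,4}"
  proof
    fix v assume "v \<in> Vs x k"
    then obtain y where y: "v = cntf x k y" "v \<noteq> 0" by (auto simp: Vs_def)
    have "v \<le> 4" using gle[of y] gle[of "y - a"] cntk[of y] y by simp
    hence "v = 1 \<or> v = 2 \<or> v = 3 \<or> v = 4" using y(2) by linarith
    thus "v \<in> {1,2,3,4}" by auto
  qed
  have one: "1 \<in> Vs x k"
  proof -
    have "cntf x k 0 = 1" using cntk[of 0] g0 gout[of "0 - a"] apos by simp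
    thus ?thesis by (rule inV) simp
  qed
  have two: "2 \<in> Vs x k"
  proof -
    have "geo c 1 < a" using cpos ca by (simp add: geo_def)
    hence "cntf x k (geo c 1) = 2" using cntk[of "geo c 1"] gJ[of 1] gout[of "geo c 1 - a"] by simp
    thus ?thesis by (rule inV) simp
  qed
  show ?thesis
  proof (cases "a \<in> dy c")
    case True
    then obtain i j where aij: "a = c * of_int i / 2^j" by (auto simp: dy_def)
    obtain ea where ea: "ea \<in> representations (geo c) a" "\<forall>n\<ge>Suc j. \<not> ea n"
      using geo_dyadic[OF cpos aij] apos a2 by auto
    have eaex: "\<exists>n. ea n"
    proof (rule ccontr)
      assume "\<not> (\<exists>n. ea n)"
      hence "(\<lambda>n. if ea n then geo c n else 0) = (\<lambda>n. 0)" by auto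
      hence "a = 0" using ea(1) by (simp add: rep_iff sums_zero sums_unique2)
      thus False using apos by simp
    qed
    have ga: "g a = 2" unfolding g_def by (rule geo_fin_card2[OF cpos ea(1) ea(2) eaex])
    have three: "3 \<in> Vs x k"
    proof -
      have "cntf x k a = 3" using cntk[of a] ga g0 by simp
      thus ?thesis by (rule inV) simp
    qed
    define e' where "e' = ea(Suc j := True)"
    have "(\<lambda>n. (if ea n then geo c n else 0) + (if n = Suc j then geo c n else 0)) sums (a + geo c (Suc j))"
      using sums_add[OF ea(1)[unfolded rep_iff] sums_single[of "Suc j" "geo c"]] .
    moreover have "(\<lambda>n. (if ea n then geo c n else 0) + (if n = Suc j then geo c n else 0))
        = (\<lambda>n. if e' n then geo c n else 0)"
      using ea(2) by (auto simp: fun_eq_iff e'_def)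
    ultimately have r': "e' \<in> representations (geo c) (a + geo c (Suc j))" by (simp add: rep_iff)
    have "g (a + geo c (Suc j)) = 2" unfolding g_def
      by (rule geo_fin_card2[OF cpos r', of "Suc (Suc j)"]) (use ea(2) in \<open>auto simp: e'_def\<close>)
    hence "cntf x k (a + geo c (Suc j)) = 4" using cntk[of "a + geo c (Suc j)"] gJ[of "Suc j"] by simp
    hence four: "4 \<in> Vs x k" by (rule inV) simp
    have "Vs x k = {1,2,3,4}" using sub one two three four by auto
    thus ?thesis using two by simp
  next
    case False
    have "(2 * c - a) / c > 0" using a2 cpos by simp
    then obtain J where J: "(1/2::real)^J < (2 * c - a) / c" using real_arch_pow_inv by fastforce
    have gJl: "geo c J < 2 * c - a"
    proof -
      have "c * (1/2::real)^J < c * ((2 * c - a) / c)" by (rule mult_strict_left_mono[OF J cpos])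
      also have "c * ((2 * c - a) / c) = 2 * c - a" using cpos by simp
      finally have "c * (1/2::real)^J < 2 * c - a" .
      thus ?thesis using cpos by (simp add: geo_def power_one_over)
    qed
    define y where "y = a + geo c J"
    have y1: "0 \<le> y" "y \<le> 2 * c" using gJl apos gpos[of J] by (auto simp: y_def)
    have gy: "g y = 1"
    proof -
      have "g y \<ge> 1" by (rule gin[OF y1])
      moreover have "g y \<noteq> 2"
      proof
        assume "g y = 2"
        hence "y \<in> dy c" by (rule g2dy)
        hence "y - geo c J \<in> dy c" using geo_in_dy dy_diff by blast
        thus False using False by (simp add: y_def)
      qed
      ultimately show ?thesis using gle[of y] by linarith
    qed
    have "cntf x k y = 3" using cntk[of y] gy gJ[of J] by (simp add: y_def)
    hence three: "3 \<in> Vs x k" by (rule inV) simp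
    have nfour: "4 \<notin> Vs x k"
    proof
      assume "4 \<in> Vs x k"
      then obtain z where "cntf x k z = 4" by (auto simp: Vs_def)
      hence "g z = 2" "g (z - a) = 2" using cntk[of z] gle[of z] gle[of "z - a"] by linarith+
      hence "z - (z - a) \<in> dy c" using g2dy dy_diff by blast
      thus False using False by simp
    qed
    have "Vs x k = {1,2,3}" using sub one two three nfour by auto
    thus ?thesis by simp
  qed
qed

end

end


theorem theorem4p9:
  fixes x :: "nat \<Rightarrow> real"
  assumes pos: "\<And>n. x n > 0"
    and summ: "summable x"
    and noninc: "decseq x"
    and ifill: "interval_filling x"
    and unique: "\<exists>!k. tail_sum x k > x k"
  shows "cardinal_function x ` achievement_set x = {1, 2, 3}
       \<or> cardinal_function x ` achievement_set x = {1, 2, 3, 4}"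
proof -
  obtain k where tk: "tail_sum x k > x k" and uq: "\<And>n. tail_sum x n > x n \<Longrightarrow> n = k"
    using unique by blast
  have Vk': "2 \<in> Vs x k \<and> (Vs x k = {1,2,3} \<or> Vs x k = {1,2,3,4})"
    by (rule Vk[OF pos summ noninc ifill tk uq])
  have V0: "Vs x 0 = Vs x k" using V_down[OF pos summ noninc ifill tk uq] Vk' by blast
  have fin: "finite (representations x y)" for y
    using finR[OF pos summ noninc ifill tk uq, of 0 y] by simp
  have img: "cardinal_function x ` achievement_set x = enat ` Vs x 0"
  proof (intro equalityI subsetI)
    fix w assume "w \<in> cardinal_function x ` achievement_set x"
    then obtain y A where w: "w = cardinal_function x y"
        and A: "(\<lambda>n. if n \<in> A then x n else 0) sums y"
      by (auto simp: achievement_set_def)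
    have "(\<lambda>n. n \<in> A) \<in> representations x y" using A by (simp add: rep_iff)
    hence ne: "representations x y \<noteq> {}" by blast
    have "cntf x 0 y \<noteq> 0" using ne fin[of y] by (simp add: cntf_def)
    hence "cntf x 0 y \<in> Vs x 0" unfolding Vs_def by blast
    moreover have "w = enat (cntf x 0 y)" using w fin[of y]
      by (simp add: cardinal_function_def cntf_def)
    ultimately show "w \<in> enat ` Vs x 0" by blast
  next
    fix w assume "w \<in> enat ` Vs x 0"
    then obtain y where w: "w = enat (cntf x 0 y)" and nz: "cntf x 0 y \<noteq> 0"
      by (auto simp: Vs_def)
    have "representations x y \<noteq> {}" using nz by (auto simp: cntf_def)
    then obtain e where "(\<lambda>n. if e n then x n else 0) sums y" by (auto simp: rep_iff)
    hence "(\<lambda>n. if n \<in> {n. e n} then x n else 0) sums y" by simp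
    hence "y \<in> achievement_set x" unfolding achievement_set_def by blast
    moreover have "cardinal_function x y = w" using w fin[of y]
      by (simp add: cardinal_function_def cntf_def)
    ultimately show "w \<in> cardinal_function x ` achievement_set x" by blast
  qed
  show ?thesis using Vk' V0 img by (auto simp: one_enat_def numeral_eq_enat)
qed

end
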